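(* If $m$ is even, then $\mathrm{U}_m-\mathrm{U}_m^\top$ is invertible with inverse $(\mathrm{U}_m-\mathrm{U}_m^\top)^{-1}=\mathrm{Q}_m(\mathrm{U}_m-\mathrm{U}_m^\top)\mathrm{Q}_m$.
   Context: $\mathrm{U}_m\in\mathbb{R}^{m\times m}$ is the strictly upper triangular matrix with all entries above the diagonal equal to $1$, and $\mathrm{Q}_m$ is the $m\times m$ diagonal matrix with diagonal entries $(-1)^{i+1}$, $i=1,\dots,m$. *)

theory Defs
  imports "Jordan_Normal_Form.Matrix" "Jordan_Normal_Form.Determinant"
begin

definition U_mat :: "nat \<Rightarrow> real mat" where
  "U_mat m = mat m m (\<lambda>(i, j). if i < j then 1 else 0)"

text \<open>Q_m: diagonal matrix with entries (-1)^(i+1) for 1-based i, i.e. (-1)^i for 0-based i.\<close>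
definition Q_mat :: "nat \<Rightarrow> real mat" where
  "Q_mat m = mat m m (\<lambda>(i, j). if i = j then (-1) ^ i else 0)"

end

theory Submission
  imports Defs
begin

definition sg :: "nat \<Rightarrow> nat \<Rightarrow> real" where
  "sg i j = (if i < j then 1 else if j < i then -1 else 0)"

definition S :: "nat \<Rightarrow> real" where
  "S n = (if even n then 0 else 1)"

lemma alt_sum: "a \<le> b \<Longrightarrow> (\<Sum>j\<in>{a..<b}. (-1::real)^j) = S b - S a"
proof (induction b)
  case 0 then show ?case by simp
next
  case (Suc b)
  show ?case
  proof (cases "a = Suc b")
    case True then show ?thesis by simp
  next
    case False
    then have "a \<le> b" using Suc by simp
    then show ?thesis using Suc by (simp add: S_def)
  qed
qed

lemma split3:
  fixes f :: "nat \<Rightarrow> real"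
  assumes "i < m"
  shows "(\<Sum>j<m. f j) = (\<Sum>j\<in>{0..<i}. f j) + f i + (\<Sum>j\<in>{Suc i..<m}. f j)"
proof -
  have "(\<Sum>j<m. f j) = (\<Sum>j\<in>{0..<m}. f j)" by (simp add: lessThan_atLeast0)
  also have "\<dots> = (\<Sum>j\<in>{0..<i}. f j) + (\<Sum>j\<in>{i..<m}. f j)"
    using assms by (simp add: sum.atLeastLessThan_concat)
  also have "(\<Sum>j\<in>{i..<m}. f j) = f i + (\<Sum>j\<in>{Suc i..<m}. f j)"
    using assms by (simp add: sum.atLeast_Suc_lessThan)
  finally show ?thesis by simp
qed

lemma key_lt:
  assumes "i < k" "k < m" "even m"
  shows "(\<Sum>j<m. (-1::real)^j * sg i j * sg j k) = 0"
proof -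
  let ?f = "\<lambda>j. (-1::real)^j * sg i j * sg j k"
  have "(\<Sum>j<m. ?f j) = (\<Sum>j\<in>{0..<i}. ?f j) + ?f i + (\<Sum>j\<in>{Suc i..<m}. ?f j)"
    using assms by (intro split3) simp
  also have "(\<Sum>j\<in>{Suc i..<m}. ?f j) = (\<Sum>j\<in>{Suc i..<k}. ?f j) + (\<Sum>j\<in>{k..<m}. ?f j)"
    using assms by (simp add: sum.atLeastLessThan_concat)
  also have "(\<Sum>j\<in>{k..<m}. ?f j) = ?f k + (\<Sum>j\<in>{Suc k..<m}. ?f j)"
    using assms by (simp add: sum.atLeast_Suc_lessThan)
  also have "(\<Sum>j\<in>{0..<i}. ?f j) = - (\<Sum>j\<in>{0..<i}. (-1::real)^j)"
    using assms by (auto simp add: sum_negf[symmetric] sg_def intro!: sum.cong)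
  also have "(\<Sum>j\<in>{Suc i..<k}. ?f j) = (\<Sum>j\<in>{Suc i..<k}. (-1::real)^j)"
    by (auto simp add: sg_def intro!: sum.cong)
  also have "(\<Sum>j\<in>{Suc k..<m}. ?f j) = - (\<Sum>j\<in>{Suc k..<m}. (-1::real)^j)"
    using assms by (auto simp add: sum_negf[symmetric] sg_def intro!: sum.cong)
  finally show ?thesis using assms
    by (simp add: alt_sum sg_def S_def)
qed

lemma key_eq:
  assumes "i < m" "even m"
  shows "(\<Sum>j<m. (-1::real)^j * sg i j * sg j i) = (-1)^i"
proof -
  let ?f = "\<lambda>j. (-1::real)^j * sg i j * sg j i"
  have "(\<Sum>j<m. ?f j) = (\<Sum>j\<in>{0..<i}. ?f j) + ?f i + (\<Sum>j\<in>{Suc i..<m}. ?f j)"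
    using assms by (intro split3) simp
  also have "(\<Sum>j\<in>{0..<i}. ?f j) = - (\<Sum>j\<in>{0..<i}. (-1::real)^j)"
    by (auto simp add: sum_negf[symmetric] sg_def intro!: sum.cong)
  also have "(\<Sum>j\<in>{Suc i..<m}. ?f j) = - (\<Sum>j\<in>{Suc i..<m}. (-1::real)^j)"
    using assms by (auto simp add: sum_negf[symmetric] sg_def intro!: sum.cong)
  finally show ?thesis using assms
    by (simp add: alt_sum sg_def S_def)
qed

lemma key:
  assumes "i < m" "k < m" "even m"
  shows "(\<Sum>j<m. (-1::real)^j * sg i j * sg j k) = (if i = k then (-1)^i else 0)"
proof -
  consider "i < k" | "i = k" | "k < i" by arith
  then show ?thesis
  proof cases
    case 1 then show ?thesis using key_lt assms by simp
  next
    case 2 then show ?thesis using key_eq assms by simp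
  next
    case 3
    have "(\<Sum>j<m. (-1::real)^j * sg i j * sg j k) = (\<Sum>j<m. (-1::real)^j * sg k j * sg j i)"
      by (intro sum.cong) (auto simp: sg_def)
    then show ?thesis using key_lt[OF 3] assms 3 by simp
  qed
qed

lemma A_eq: "U_mat m - (U_mat m)\<^sup>T = mat m m (\<lambda>(i,j). sg i j)"
  by (rule eq_matI) (auto simp: U_mat_def sg_def)

lemma diag_left:
  assumes "i < m"
  shows "(\<Sum>j<m. (if i = j then (-1::real)^i else 0) * f j) = (-1)^i * f i"
proof -
  have "(\<Sum>j<m. (if i = j then (-1::real)^i else 0) * f j) = (\<Sum>j<m. if j = i then (-1)^i * f i else 0)"
    by (intro sum.cong) auto
  then show ?thesis using assms by simp
qed

lemma diag_right:
  assumes "i < m"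
  shows "(\<Sum>j<m. f j * (if j = i then (-1::real)^j else 0)) = (-1)^i * f i"
proof -
  have "(\<Sum>j<m. f j * (if j = i then (-1::real)^j else 0)) = (\<Sum>j<m. if j = i then (-1)^i * f i else 0)"
    by (intro sum.cong) auto
  then show ?thesis using assms by simp
qed

lemma B_eq: "Q_mat m * (U_mat m - (U_mat m)\<^sup>T) * Q_mat m
   = mat m m (\<lambda>(i,j). (-1)^i * (-1)^j * sg i j)"
proof (rule eq_matI)
  fix i j assume ij: "i < dim_row (mat m m (\<lambda>(i,j). (-1::real)^i * (-1)^j * sg i j))"
     "j < dim_col (mat m m (\<lambda>(i,j). (-1::real)^i * (-1)^j * sg i j))"
  then have i: "i < m" and j: "j < m" by auto
  have QA: "Q_mat m * (U_mat m - (U_mat m)\<^sup>T) = mat m m (\<lambda>(i,j). (-1)^i * sg i j)"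
  proof (rule eq_matI)
    fix a b assume "a < dim_row (mat m m (\<lambda>(i,j). (-1::real)^i * sg i j))"
      "b < dim_col (mat m m (\<lambda>(i,j). (-1::real)^i * sg i j))"
    then have a: "a < m" and b: "b < m" by auto
    show "(Q_mat m * (U_mat m - (U_mat m)\<^sup>T)) $$ (a, b) = mat m m (\<lambda>(i,j). (-1::real)^i * sg i j) $$ (a, b)"
      using a b diag_left[OF a, of "\<lambda>j. sg j b"]
      by (simp add: A_eq Q_mat_def scalar_prod_def atLeast0LessThan)
  qed (auto simp: A_eq Q_mat_def)
  show "(Q_mat m * (U_mat m - (U_mat m)\<^sup>T) * Q_mat m) $$ (i, j) = mat m m (\<lambda>(i,j). (-1::real)^i * (-1)^j * sg i j) $$ (i, j)"
    unfolding QA using i j diag_right[OF j, of "\<lambda>k. (-1)^i * sg i k"]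
    by (simp add: Q_mat_def scalar_prod_def atLeast0LessThan mult.commute mult.left_commute)
qed (auto simp: Q_mat_def A_eq)

theorem corollary7p5:
  fixes m :: nat
  assumes "even m"
  shows "invertible_mat (U_mat m - (U_mat m)\<^sup>T) \<and>
         inverts_mat (U_mat m - (U_mat m)\<^sup>T) (Q_mat m * (U_mat m - (U_mat m)\<^sup>T) * Q_mat m) \<and>
         inverts_mat (Q_mat m * (U_mat m - (U_mat m)\<^sup>T) * Q_mat m) (U_mat m - (U_mat m)\<^sup>T)"
proof -
  let ?A = "mat m m (\<lambda>(i,j). sg i j)"
  let ?B = "mat m m (\<lambda>(i,j). (-1::real)^i * (-1)^j * sg i j)"
  have AB: "?A * ?B = 1\<^sub>m m"
  proof (rule eq_matI)
    fix i k assume "i < dim_row (1\<^sub>m m :: real mat)" "k < dim_col (1\<^sub>m m :: real mat)"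
    then have i: "i < m" and k: "k < m" by auto
    have "(\<Sum>j<m. sg i j * ((-1::real)^j * (-1)^k * sg j k)) = (-1)^k * (\<Sum>j<m. (-1::real)^j * sg i j * sg j k)"
      by (simp add: sum_distrib_left mult_ac)
    also have "\<dots> = (if i = k then 1 else 0)" using key[OF i k assms]
      by simp
    finally show "(?A * ?B) $$ (i, k) = 1\<^sub>m m $$ (i, k)"
      using i k by (simp add: scalar_prod_def atLeast0LessThan)
  qed auto
  have BA: "?B * ?A = 1\<^sub>m m"
  proof (rule eq_matI)
    fix i k assume "i < dim_row (1\<^sub>m m :: real mat)" "k < dim_col (1\<^sub>m m :: real mat)"
    then have i: "i < m" and k: "k < m" by auto
    have "(\<Sum>j<m. (-1::real)^i * (-1)^j * sg i j * sg j k) = (-1)^i * (\<Sum>j<m. (-1::real)^j * sg i j * sg j k)"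
      by (simp add: sum_distrib_left mult_ac)
    also have "\<dots> = (if i = k then 1 else 0)" using key[OF i k assms]
      by (simp add: power_mult_distrib[symmetric])
    finally show "(?B * ?A) $$ (i, k) = 1\<^sub>m m $$ (i, k)"
      using i k by (simp add: scalar_prod_def atLeast0LessThan)
  qed auto
  have inv: "invertible_mat ?A"
    unfolding invertible_mat_def using AB BA by (auto simp: inverts_mat_def)
  show ?thesis unfolding B_eq unfolding A_eq using inv AB BA by (simp add: inverts_mat_def Q_mat_def)
qed

end
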